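(* There exists a set $W \subseteq \mathbb{Z}$ such that $W + W = \mathbb{Z}$ and $W$ contains no 3-term arithmetic progression.
   Context: For $X, Y \subseteq \mathbb{Z}$, $X + Y = \{x + y : x \in X, y \in Y\}$. A 3-term arithmetic progression in $W$ is a triple $w - d, w, w + d$ of elements of $W$ with $d \neq 0$. *)

theory Defs
  imports Main
begin

definition sumset :: "int set \<Rightarrow> int set \<Rightarrow> int set" where
  "sumset X Y = {x + y | x y. x \<in> X \<and> y \<in> Y}"

definition has_3AP :: "int set \<Rightarrow> bool" where
  "has_3AP W \<longleftrightarrow> (\<exists>w d. d \<noteq> 0 \<and> w - d \<in> W \<and> w \<in> W \<and> w + d \<in> W)"

end

theory Submission
  imports Defs
begin

definition DD :: "int set" where "DD = {-2, 0, 1, 3}"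

inductive_set WW :: "int set" where
  z: "0 \<in> WW"
| s: "w \<in> WW \<Longrightarrow> d \<in> DD \<Longrightarrow> d + 9 * w \<in> WW"

lemma WW_dec: "w \<in> WW \<Longrightarrow> \<exists>d\<in>DD. \<exists>w'\<in>WW. w = d + 9 * w'"
  by (erule WW.cases) (auto simp: DD_def intro: WW.z)

lemma digit_all: "\<forall>a\<in>{-2,0,1,3::int}. \<forall>b\<in>{-2,0,1,3::int}. \<forall>c\<in>{-2,0,1,3::int}. (a + c - 2 * b) mod 9 = 0 \<longrightarrow> a = b \<and> c = b"
  by simp
lemma digit_ap:
  assumes "a \<in> DD" "b \<in> DD" "c \<in> DD" "(a + c - 2 * b) mod 9 = 0"
  shows "a = b \<and> c = b"
  using digit_all[unfolded Ball_def, rule_format, of a b c] assms unfolding DD_def by (metis (no_types))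

lemma shrink: "(a::int) = d + 9*a' \<Longrightarrow> \<bar>d\<bar> \<le> 6 \<Longrightarrow> \<bar>a'\<bar> \<le> \<bar>a\<bar> \<and> (a \<noteq> 0 \<longrightarrow> \<bar>a'\<bar> < \<bar>a\<bar>)"
proof -
  assume h: "a = d + 9*a'" "\<bar>d\<bar> \<le> 6"
  have "\<bar>9 * a'\<bar> \<le> \<bar>a\<bar> + \<bar>d\<bar>" using abs_triangle_ineq4[of a d] h(1) by simp
  then have t: "9 * \<bar>a'\<bar> \<le> \<bar>a\<bar> + \<bar>d\<bar>" by (simp add: abs_mult)
  show ?thesis
  proof (cases "a' = 0")
    case True then show ?thesis by simp
  next
    case False
    then have "\<bar>a'\<bar> \<ge> 1" by simp
    then show ?thesis using t h(2) by linarith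
  qed
qed
lemma s1: "nat \<bar>a\<bar> + nat \<bar>c\<bar> = (N::nat) \<Longrightarrow> \<not>(a = 0 \<and> c = 0) \<Longrightarrow> \<bar>da\<bar> \<le> (3::int) \<Longrightarrow> \<bar>dc\<bar> \<le> 3 \<Longrightarrow> a = da + 9*a' \<Longrightarrow> c = dc + 9*c' \<Longrightarrow> nat \<bar>a'\<bar> + nat \<bar>c'\<bar> < N"
proof -
  assume h: "nat \<bar>a\<bar> + nat \<bar>c\<bar> = N" "\<not>(a = 0 \<and> c = 0)" "\<bar>da\<bar> \<le> 3" "\<bar>dc\<bar> \<le> 3" "a = da + 9*a'" "c = dc + 9*c'"
  have A: "\<bar>a'\<bar> \<le> \<bar>a\<bar> \<and> (a \<noteq> 0 \<longrightarrow> \<bar>a'\<bar> < \<bar>a\<bar>)" using shrink[OF h(5)] h(3) by simp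
  have C: "\<bar>c'\<bar> \<le> \<bar>c\<bar> \<and> (c \<noteq> 0 \<longrightarrow> \<bar>c'\<bar> < \<bar>c\<bar>)" using shrink[OF h(6)] h(4) by simp
  have "\<bar>a'\<bar> + \<bar>c'\<bar> < \<bar>a\<bar> + \<bar>c\<bar>" using A C h(2) by linarith
  then have "int (nat \<bar>a'\<bar> + nat \<bar>c'\<bar>) < int (nat \<bar>a\<bar> + nat \<bar>c\<bar>)" by simp
  then show ?thesis using h(1) by linarith
qed
lemma s2: "nat \<bar>n\<bar> = (N::nat) \<Longrightarrow> n \<noteq> 0 \<Longrightarrow> \<bar>d1\<bar> \<le> (3::int) \<Longrightarrow> \<bar>d2\<bar> \<le> 3 \<Longrightarrow> n - d1 - d2 = 9*n' \<Longrightarrow> nat \<bar>n'\<bar> < N"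
proof -
  assume h: "nat \<bar>n\<bar> = N" "n \<noteq> 0" "\<bar>d1\<bar> \<le> 3" "\<bar>d2\<bar> \<le> 3" "n - d1 - d2 = 9*n'"
  have "n = (d1 + d2) + 9 * n'" using h(5) by simp
  moreover have "\<bar>d1 + d2\<bar> \<le> 6" using h(3,4) abs_triangle_ineq[of d1 d2] by linarith
  ultimately have "\<bar>n'\<bar> < \<bar>n\<bar>" using shrink h(2) by blast
  then show ?thesis using h(1) by linarith
qed

lemma noap_aux:
  "\<forall>a c m. nat \<bar>a\<bar> + nat \<bar>c\<bar> = N \<longrightarrow> a \<in> WW \<longrightarrow> c \<in> WW \<longrightarrow> m \<in> WW \<longrightarrow> a + c = 2 * m \<longrightarrow> a = c"
proof (induction N rule: less_induct)
  case (less N)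
  show ?case
  proof (intro allI impI)
    fix a c m
    assume N: "nat \<bar>a\<bar> + nat \<bar>c\<bar> = N" and a: "a \<in> WW" and c: "c \<in> WW" and m: "m \<in> WW"
      and e: "a + c = 2 * m"
    show "a = c"
    proof (cases "a = 0 \<and> c = 0")
      case True then show ?thesis by simp
    next
      case False
      obtain da a' where da: "da \<in> DD" "a' \<in> WW" "a = da + 9 * a'" using WW_dec[OF a] by blast
      obtain dc c' where dc: "dc \<in> DD" "c' \<in> WW" "c = dc + 9 * c'" using WW_dec[OF c] by blast
      obtain dm m' where dm: "dm \<in> DD" "m' \<in> WW" "m = dm + 9 * m'" using WW_dec[OF m] by blast
      have "(da + dc - 2 * dm) mod 9 = 0"
      proof -
        have "da + dc - 2 * dm = 9 * (2 * m' - a' - c')" using e da(3) dc(3) dm(3) by (simp add: algebra_simps)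
        then show ?thesis by simp
      qed
      then have eq: "da = dm \<and> dc = dm" by (rule digit_ap[OF da(1) dm(1) dc(1)])
      then have e': "a' + c' = 2 * m'" using e da(3) dc(3) dm(3) by linarith
      have bd: "\<bar>da\<bar> \<le> 3" "\<bar>dc\<bar> \<le> 3" using da(1) dc(1) by (auto simp: DD_def)
      have "nat \<bar>a'\<bar> + nat \<bar>c'\<bar> < N"
        using s1[OF N False bd da(3) dc(3)] .
      from less.IH[rule_format, OF this refl da(2) dc(2) dm(2) e'] have "a' = c'" .
      then show "a = c" using da dc eq by simp
    qed
  qed
qed

lemma no_ap: "\<not> has_3AP WW"
proof
  assume "has_3AP WW"
  then obtain w d where "d \<noteq> 0" "w - d \<in> WW" "w \<in> WW" "w + d \<in> WW" unfolding has_3AP_def by blast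
  then have "(w - d) + (w + d) = 2 * w" by simp
  from noap_aux[rule_format, OF refl \<open>w - d \<in> WW\<close> \<open>w + d \<in> WW\<close> \<open>w \<in> WW\<close> this]
  have "w - d = w + d" .
  with \<open>d \<noteq> 0\<close> show False by simp
qed

lemma digits2: "\<exists>d1\<in>DD. \<exists>d2\<in>DD. (n - d1 - d2) mod 9 = 0"
proof -
  have "n mod 9 = 0 \<or> n mod 9 = 1 \<or> n mod 9 = 2 \<or> n mod 9 = 3 \<or> n mod 9 = 4 \<or> n mod 9 = 5 \<or> n mod 9 = 6 \<or> n mod 9 = 7 \<or> n mod 9 = 8" by presburger
  then show ?thesis
  proof (elim disjE)
    assume "n mod 9 = 0"
    then have "(n - (0) - (0)) mod 9 = 0" by presburger
    then show ?thesis by (intro bexI[of _ "0"] bexI[of _ "0"]) (auto simp: DD_def)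
  next
    assume "n mod 9 = 1"
    then have "(n - (0) - (1)) mod 9 = 0" by presburger
    then show ?thesis by (intro bexI[of _ "0"] bexI[of _ "1"]) (auto simp: DD_def)
  next
    assume "n mod 9 = 2"
    then have "(n - (1) - (1)) mod 9 = 0" by presburger
    then show ?thesis by (intro bexI[of _ "1"] bexI[of _ "1"]) (auto simp: DD_def)
  next
    assume "n mod 9 = 3"
    then have "(n - (0) - (3)) mod 9 = 0" by presburger
    then show ?thesis by (intro bexI[of _ "0"] bexI[of _ "3"]) (auto simp: DD_def)
  next
    assume "n mod 9 = 4"
    then have "(n - (1) - (3)) mod 9 = 0" by presburger
    then show ?thesis by (intro bexI[of _ "1"] bexI[of _ "3"]) (auto simp: DD_def)
  next
    assume "n mod 9 = 5"
    then have "(n - (-2) - (-2)) mod 9 = 0" by presburger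
    then show ?thesis by (intro bexI[of _ "-2"] bexI[of _ "-2"]) (auto simp: DD_def)
  next
    assume "n mod 9 = 6"
    then have "(n - (3) - (3)) mod 9 = 0" by presburger
    then show ?thesis by (intro bexI[of _ "3"] bexI[of _ "3"]) (auto simp: DD_def)
  next
    assume "n mod 9 = 7"
    then have "(n - (-2) - (0)) mod 9 = 0" by presburger
    then show ?thesis by (intro bexI[of _ "-2"] bexI[of _ "0"]) (auto simp: DD_def)
  next
    assume "n mod 9 = 8"
    then have "(n - (-2) - (1)) mod 9 = 0" by presburger
    then show ?thesis by (intro bexI[of _ "-2"] bexI[of _ "1"]) (auto simp: DD_def)
  qed
qed

lemma sumsetI: "x \<in> X \<Longrightarrow> y \<in> Y \<Longrightarrow> x + y \<in> sumset X Y"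
  unfolding sumset_def by blast

lemma sumsetE: "z \<in> sumset X Y \<Longrightarrow> (\<And>x y. x \<in> X \<Longrightarrow> y \<in> Y \<Longrightarrow> z = x + y \<Longrightarrow> P) \<Longrightarrow> P"
  unfolding sumset_def by blast

lemma cover_aux: "\<forall>n. nat \<bar>n\<bar> = N \<longrightarrow> n \<in> sumset WW WW"
proof (induction N rule: less_induct)
  case (less N)
  show ?case
  proof (intro allI impI)
    fix n :: int assume N: "nat \<bar>n\<bar> = N"
    show "n \<in> sumset WW WW"
    proof (cases "n = 0")
      case True
      have "0 + 0 \<in> sumset WW WW" by (rule sumsetI[OF WW.z WW.z])
      then show ?thesis using True by simp
    next
      case False
      obtain d1 d2 where d: "d1 \<in> DD" "d2 \<in> DD" "(n - d1 - d2) mod 9 = 0" using digits2[of n] by (elim bexE) (rule that; assumption)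
      have "9 dvd (n - d1 - d2)" using d(3) by (simp add: dvd_eq_mod_eq_0)
      then obtain n' where n': "n - d1 - d2 = 9 * n'" by (elim dvdE)
      have b1: "\<bar>d1\<bar> \<le> 3" using d(1) unfolding DD_def by auto
      have b2: "\<bar>d2\<bar> \<le> 3" using d(2) unfolding DD_def by auto
      have "nat \<bar>n'\<bar> < N" by (rule s2[OF N False b1 b2 n'])
      from less.IH[rule_format, OF this refl] have "n' \<in> sumset WW WW" .
      then obtain x y where xy: "x \<in> WW" "y \<in> WW" "n' = x + y" by (rule sumsetE)
      have e9: "9 * n' = 9 * x + 9 * y" using xy(3) by (simp only: distrib_left)
      have eqn: "n = (d1 + 9 * x) + (d2 + 9 * y)" using n' e9 by linarith
      have "(d1 + 9 * x) + (d2 + 9 * y) \<in> sumset WW WW"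
        by (rule sumsetI[OF WW.s[OF xy(1) d(1)] WW.s[OF xy(2) d(2)]])
      then show ?thesis by (simp only: eqn)
    qed
  qed
qed

theorem proposition3:
  shows "\<exists>W :: int set. sumset W W = UNIV \<and> \<not> has_3AP W"
proof (intro exI conjI)
  show "sumset WW WW = UNIV"
  proof (rule set_eqI, rule iffI)
    fix n :: int
    show "n \<in> sumset WW WW" using cover_aux[rule_format, OF refl] .
  qed simp
  show "\<not> has_3AP WW" by (rule no_ap)
qed

end
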